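(* Let $\psi:\mathbb{R}\to\mathbb{R}$ satisfy $|\psi(x)|\leq C(1+|x|)^{-1-\varepsilon}$ for all $x\in\mathbb{R}$, for some constants $C,\varepsilon>0$. Let $\{a_I:I\in\mathcal{D}\}$ be independent random variables on $(\Omega,\mathscr{F},\mathscr{P})$ with $a_I\in\mathscr{G}(\nu)$ for every $I$, for some fixed $\nu>0$, and with $\sum_{I\in\mathcal{D}}\mathscr{E}|a_I|<\infty$. Then for every $x\neq y$ in $\mathbb{R}$, the series $$K(x,y;\omega)=\sum_{I\in\mathcal{D}}a_I(\omega)\psi_I(x)\psi_I(y)$$ converges for $\mathscr{P}$-almost every $\omega\in\Omega$.
   Context: $\mathcal{D}=\bigcup_{j\in\mathbb{Z}}\mathcal{D}^j$ is the family of dyadic intervals of $\mathbb{R}$, $\mathcal{D}^j=\{I^j_k=[k2^{-j},(k+1)2^{-j}):k\in\mathbb{Z}\}$. For $I=I^j_k$, $\psi_I(x)=2^{j/2}\psi(2^jx-k)$. For an integrable random variable $X$, $\eta_{X-\mathscr{E}X}(\lambda)=\log \mathscr{E}e^{\lambda(X-\mathscr{E}X)}$, and $X\in\mathscr{G}(\nu)$ means $X$ is integrable and $\eta_{X-\mathscr{E}X}(\lambda)\leq \lambda^2\nu/2$ for all $\lambda\in\mathbb{R}$. (The series is understood along any fixed enumeration of $\mathcal{D}$.) *)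

theory Defs
  imports "HOL-Probability.Probability"
begin

text \<open>Dyadic interval I^j_k = [k 2^-j, (k+1) 2^-j) is indexed by the pair (j,k) of integers.
  psi_I(x) = 2^(j/2) psi(2^j x - k).\<close>
definition dyadic_psi :: "(real \<Rightarrow> real) \<Rightarrow> int \<times> int \<Rightarrow> real \<Rightarrow> real" where
  "dyadic_psi \<psi> I x = (case I of (j, k) \<Rightarrow> 2 powr (real_of_int j / 2) * \<psi> (2 powr real_of_int j * x - real_of_int k))"

definition subgaussian_class :: "'a measure \<Rightarrow> real \<Rightarrow> ('a \<Rightarrow> real) \<Rightarrow> bool" where
  "subgaussian_class M \<nu> X \<longleftrightarrow>
     integrable M X \<and>
     (\<forall>t::real. integrable M (\<lambda>\<omega>. exp (t * (X \<omega> - integral\<^sup>L M X))) \<and>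
        ln (integral\<^sup>L M (\<lambda>\<omega>. exp (t * (X \<omega> - integral\<^sup>L M X)))) \<le> t\<^sup>2 * \<nu> / 2)"

end

theory Submission
  imports Defs
begin

lemma psi_bound:
  fixes \<psi> :: "real \<Rightarrow> real" and C \<epsilon> u :: real
  assumes "C > 0" "\<epsilon> > 0" "\<And>x. \<bar>\<psi> x\<bar> \<le> C * (1 + \<bar>x\<bar>) powr (- 1 - \<epsilon>)"
  shows "\<bar>\<psi> u\<bar> \<le> C / (1 + \<bar>u\<bar>)"
proof -
  have "(1 + \<bar>u\<bar>) powr (- 1 - \<epsilon>) \<le> (1 + \<bar>u\<bar>) powr (-1)"
    by (rule powr_mono) (use assms(2) in auto)
  also have "\<dots> = 1 / (1 + \<bar>u\<bar>)" by (simp add: powr_minus_divide)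
  finally have "C * (1 + \<bar>u\<bar>) powr (- 1 - \<epsilon>) \<le> C * (1 / (1 + \<bar>u\<bar>))"
    using assms(1) by (intro mult_left_mono) auto
  with assms(3)[of u] show ?thesis by simp
qed

lemma prod_bound:
  fixes \<psi> :: "real \<Rightarrow> real" and C \<epsilon> :: real
  assumes "C > 0" "\<epsilon> > 0" "\<And>x. \<bar>\<psi> x\<bar> \<le> C * (1 + \<bar>x\<bar>) powr (- 1 - \<epsilon>)"
    and "x \<noteq> (y::real)"
  shows "\<bar>dyadic_psi \<psi> I x * dyadic_psi \<psi> I y\<bar> \<le> C^2 / \<bar>x - y\<bar>"
proof -
  obtain j k where I: "I = (j, k)" by (cases I)
  define t where "t = 2 powr real_of_int j"
  define u where "u = t * x - real_of_int k"
  define v where "v = t * y - real_of_int k"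
  define d where "d = \<bar>x - y\<bar>"
  have t0: "t > 0" unfolding t_def by simp
  have d0: "d > 0" using assms(4) unfolding d_def by simp
  have hh: "2 powr (real_of_int j / 2) * 2 powr (real_of_int j / 2) = t"
    unfolding t_def by (simp flip: powr_add)
  have eq: "dyadic_psi \<psi> I x * dyadic_psi \<psi> I y = t * (\<psi> u * \<psi> v)"
    unfolding dyadic_psi_def I u_def v_def t_def using hh[unfolded t_def] by (simp add: algebra_simps)
  have uv: "\<bar>u\<bar> + \<bar>v\<bar> \<ge> t * d"
  proof -
    have "t * d = \<bar>u - v\<bar>" unfolding u_def v_def d_def using t0
      by (simp add: abs_mult flip: right_diff_distrib)
    thus ?thesis by linarith
  qed
  have pu: "\<bar>\<psi> u\<bar> \<le> C / (1 + \<bar>u\<bar>)" and pv: "\<bar>\<psi> v\<bar> \<le> C / (1 + \<bar>v\<bar>)"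
    using psi_bound[OF assms(1-3)] by auto
  have "\<bar>\<psi> u * \<psi> v\<bar> \<le> C / (1 + \<bar>u\<bar>) * (C / (1 + \<bar>v\<bar>))"
    unfolding abs_mult using assms(1) by (intro mult_mono pu pv) auto
  also have "\<dots> = C^2 / ((1 + \<bar>u\<bar>) * (1 + \<bar>v\<bar>))" by (simp add: power2_eq_square)
  also have "\<dots> \<le> C^2 / (1 + t * d)"
  proof (rule divide_left_mono)
    have "(1 + \<bar>u\<bar>) * (1 + \<bar>v\<bar>) \<ge> 1 + \<bar>u\<bar> + \<bar>v\<bar>"
      by (simp add: algebra_simps)
    thus "1 + t * d \<le> (1 + \<bar>u\<bar>) * (1 + \<bar>v\<bar>)" using uv by linarith
    show "0 \<le> C^2" by simp
    show "0 < (1 + \<bar>u\<bar>) * (1 + \<bar>v\<bar>) * (1 + t * d)" using t0 d0 by (intro mult_pos_pos) (auto intro: add_pos_nonneg)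
  qed
  finally have "\<bar>dyadic_psi \<psi> I x * dyadic_psi \<psi> I y\<bar> \<le> t * (C^2 / (1 + t * d))"
    unfolding eq abs_mult using t0 mult_left_mono[of "\<bar>\<psi> u\<bar> * \<bar>\<psi> v\<bar>" "C^2 / (1 + t * d)" t] by simp
  also have "\<dots> \<le> C^2 / d"
  proof -
    have "t * (C^2 / (1 + t * d)) = C^2 * t / (1 + t * d)" by simp
    also have "\<dots> \<le> C^2 * t / (t * d)"
      using t0 d0 by (intro divide_left_mono mult_nonneg_nonneg mult_pos_pos) (auto intro: add_pos_nonneg)
    also have "\<dots> = C^2 / d" using t0 by simp
    finally show ?thesis .
  qed
  finally show ?thesis unfolding d_def .
qed

theorem theorem3p1:
  fixes M :: "'a measure" and \<psi> :: "real \<Rightarrow> real" and C \<epsilon> \<nu> :: real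
    and a :: "int \<times> int \<Rightarrow> 'a \<Rightarrow> real"
  assumes "prob_space M"
    and "C > 0" and "\<epsilon> > 0"
    and "\<And>x. \<bar>\<psi> x\<bar> \<le> C * (1 + \<bar>x\<bar>) powr (- 1 - \<epsilon>)"
    and "\<And>I. a I \<in> borel_measurable M"
    and "prob_space.indep_vars M (\<lambda>_. borel) a UNIV"
    and "\<nu> > 0"
    and "\<And>I. subgaussian_class M \<nu> (a I)"
    and "(\<lambda>I. integral\<^sup>L M (\<lambda>\<omega>. \<bar>a I \<omega>\<bar>)) summable_on UNIV"
  shows "\<forall>x y (e :: nat \<Rightarrow> int \<times> int). x \<noteq> y \<and> bij e \<longrightarrow>
           (AE \<omega> in M. summable (\<lambda>n. a (e n) \<omega> * dyadic_psi \<psi> (e n) x * dyadic_psi \<psi> (e n) y))"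
proof (intro allI impI, elim conjE)
  fix x y :: real and e :: "nat \<Rightarrow> int \<times> int"
  assume xy: "x \<noteq> y" and be: "bij e"
  have int: "integrable M (a I)" for I using assms(8) unfolding subgaussian_class_def by auto
  have "(\<lambda>n. integral\<^sup>L M (\<lambda>\<omega>. \<bar>a (e n) \<omega>\<bar>)) summable_on UNIV"
    using summable_on_reindex_bij_betw[of e UNIV UNIV "\<lambda>I. integral\<^sup>L M (\<lambda>\<omega>. \<bar>a I \<omega>\<bar>)"] be assms(9)
    by (simp add: bij_betw_def bij_def)
  hence sm: "summable (\<lambda>n. integral\<^sup>L M (\<lambda>\<omega>. \<bar>a (e n) \<omega>\<bar>))"
    by (subst summable_on_UNIV_nonneg_real_iff[symmetric]) auto
  have "(\<integral>\<^sup>+ \<omega>. (\<Sum>n. ennreal \<bar>a (e n) \<omega>\<bar>) \<partial>M) = (\<Sum>n. \<integral>\<^sup>+ \<omega>. ennreal \<bar>a (e n) \<omega>\<bar> \<partial>M)"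
    using assms(5) by (intro nn_integral_suminf) auto
  also have "\<dots> = (\<Sum>n. ennreal (integral\<^sup>L M (\<lambda>\<omega>. \<bar>a (e n) \<omega>\<bar>)))"
    by (intro arg_cong[where f=suminf] ext nn_integral_eq_integral integrable_abs int) auto
  also have "\<dots> = ennreal (\<Sum>n. integral\<^sup>L M (\<lambda>\<omega>. \<bar>a (e n) \<omega>\<bar>))"
    using sm by (intro suminf_ennreal2) auto
  finally have fin: "(\<integral>\<^sup>+ \<omega>. (\<Sum>n. ennreal \<bar>a (e n) \<omega>\<bar>) \<partial>M) \<noteq> \<infinity>" by simp
  have "AE \<omega> in M. (\<Sum>n. ennreal \<bar>a (e n) \<omega>\<bar>) \<noteq> \<infinity>"
    using assms(5) by (intro nn_integral_PInf_AE fin) auto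
  thus "AE \<omega> in M. summable (\<lambda>n. a (e n) \<omega> * dyadic_psi \<psi> (e n) x * dyadic_psi \<psi> (e n) y)"
  proof eventually_elim
    case (elim \<omega>)
    have s1: "summable (\<lambda>n. \<bar>a (e n) \<omega>\<bar>)"
      using elim by (intro summable_suminf_not_top) auto
    hence s2: "summable (\<lambda>n. \<bar>a (e n) \<omega>\<bar> * (C^2 / \<bar>x - y\<bar>))"
      by (rule summable_mult2)
    show ?case
    proof (rule summable_comparison_test[OF _ s2], intro exI allI impI)
      fix n
      have "norm (a (e n) \<omega> * dyadic_psi \<psi> (e n) x * dyadic_psi \<psi> (e n) y)
          = \<bar>a (e n) \<omega>\<bar> * \<bar>dyadic_psi \<psi> (e n) x * dyadic_psi \<psi> (e n) y\<bar>"
        by (simp add: abs_mult)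
      also have "\<dots> \<le> \<bar>a (e n) \<omega>\<bar> * (C^2 / \<bar>x - y\<bar>)"
        by (intro mult_left_mono prod_bound[OF assms(2-4) xy]) auto
      finally show "norm (a (e n) \<omega> * dyadic_psi \<psi> (e n) x * dyadic_psi \<psi> (e n) y)
          \<le> \<bar>a (e n) \<omega>\<bar> * (C^2 / \<bar>x - y\<bar>)" .
    qed
  qed
qed

end
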